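(* Every set star Lindelöf space of cardinality less than $\mathfrak b$ is set star Hurewicz, and every set strongly star Lindelöf space of cardinality less than $\mathfrak b$ is set strongly star Hurewicz.
   Context: For a family $\mathcal U$ of subsets of $X$ and $A\subseteq X$, $st(A,\mathcal U)=\bigcup\{U\in\mathcal U: U\cap A\neq\emptyset\}$. $X$ is set star Lindelöf (resp. set strongly star Lindelöf) if for every nonempty $A\subseteq X$ and every family $\mathcal U$ of open sets with $\overline A\subseteq\bigcup\mathcal U$ there is a countable $\mathcal V\subseteq\mathcal U$ with $A\subseteq st(\bigcup\mathcal V,\mathcal U)$ (resp. a countable $F\subseteq\overline A$ with $A\subseteq st(F,\mathcal U)$). $X$ is set star Hurewicz (resp. set strongly star Hurewicz) if for every nonempty $A\subseteq X$ and every sequence $(\mathcal U_n:n\in\omega)$ of families of open sets with $\overline A\subseteq\bigcup\mathcal U_n$ for all $n$ there are finite $\mathcal V_n\subseteq\mathcal U_n$ (resp. finite $F_n\subseteq\overline A$) such that each $x\in A$ lies in $st(\bigcup\mathcal V_n,\mathcal U_n)$ (resp. $st(F_n,\mathcal U_n)$) for all but finitely many $n$. $\mathfrak b$ is the minimal cardinality of a subset of $\omega^\omega$ unbounded with respect to $\leq^*$ ($f\leq^*g$ iff $f(n)\leq g(n)$ for all but finitely many $n$). *)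

theory Defs
  imports "HOL-Analysis.Analysis"
begin

definition st :: "'a set \<Rightarrow> 'a set set \<Rightarrow> 'a set" where
  "st A \<U> = \<Union>{U \<in> \<U>. U \<inter> A \<noteq> {}}"

definition set_star_Lindelof :: "'a topology \<Rightarrow> bool" where
  "set_star_Lindelof X \<longleftrightarrow>
    (\<forall>A \<U>. A \<noteq> {} \<and> A \<subseteq> topspace X \<and> (\<forall>U\<in>\<U>. openin X U) \<and> X closure_of A \<subseteq> \<Union>\<U> \<longrightarrow>
      (\<exists>\<V>. countable \<V> \<and> \<V> \<subseteq> \<U> \<and> A \<subseteq> st (\<Union>\<V>) \<U>))"

definition set_strongly_star_Lindelof :: "'a topology \<Rightarrow> bool" where
  "set_strongly_star_Lindelof X \<longleftrightarrow>
    (\<forall>A \<U>. A \<noteq> {} \<and> A \<subseteq> topspace X \<and> (\<forall>U\<in>\<U>. openin X U) \<and> X closure_of A \<subseteq> \<Union>\<U> \<longrightarrow>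
      (\<exists>F. countable F \<and> F \<subseteq> X closure_of A \<and> A \<subseteq> st F \<U>))"

definition set_star_Hurewicz :: "'a topology \<Rightarrow> bool" where
  "set_star_Hurewicz X \<longleftrightarrow>
    (\<forall>A (\<U> :: nat \<Rightarrow> 'a set set). A \<noteq> {} \<and> A \<subseteq> topspace X \<and>
       (\<forall>n. (\<forall>U\<in>\<U> n. openin X U) \<and> X closure_of A \<subseteq> \<Union>(\<U> n)) \<longrightarrow>
      (\<exists>\<V> :: nat \<Rightarrow> 'a set set. (\<forall>n. finite (\<V> n) \<and> \<V> n \<subseteq> \<U> n) \<and>
         (\<forall>x\<in>A. \<forall>\<^sub>F n in sequentially. x \<in> st (\<Union>(\<V> n)) (\<U> n))))"

definition set_strongly_star_Hurewicz :: "'a topology \<Rightarrow> bool" where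
  "set_strongly_star_Hurewicz X \<longleftrightarrow>
    (\<forall>A (\<U> :: nat \<Rightarrow> 'a set set). A \<noteq> {} \<and> A \<subseteq> topspace X \<and>
       (\<forall>n. (\<forall>U\<in>\<U> n. openin X U) \<and> X closure_of A \<subseteq> \<Union>(\<U> n)) \<longrightarrow>
      (\<exists>F :: nat \<Rightarrow> 'a set. (\<forall>n. finite (F n) \<and> F n \<subseteq> X closure_of A) \<and>
         (\<forall>x\<in>A. \<forall>\<^sub>F n in sequentially. x \<in> st (F n) (\<U> n))))"

definition le_star :: "(nat \<Rightarrow> nat) \<Rightarrow> (nat \<Rightarrow> nat) \<Rightarrow> bool" where
  "le_star f g \<longleftrightarrow> (\<forall>\<^sub>F n in sequentially. f n \<le> g n)"

definition unbounded_family :: "(nat \<Rightarrow> nat) set \<Rightarrow> bool" where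
  "unbounded_family F \<longleftrightarrow> \<not> (\<exists>g. \<forall>f\<in>F. le_star f g)"

text \<open>A set S has cardinality less than \<open>\<bb>\<close> (the least cardinality of an unbounded
  family) iff it is strictly smaller in cardinality than every unbounded family.\<close>
definition card_less_b :: "'a set \<Rightarrow> bool" where
  "card_less_b S \<longleftrightarrow> (\<forall>F. unbounded_family F \<longrightarrow> ordLess2 (card_of S) (card_of F))"

end

theory Submission
  imports Defs
begin

lemma st_mono: "B \<subseteq> C \<Longrightarrow> st B U \<subseteq> st C U"
  by (auto simp: st_def)

lemma st_empty: "st {} U = {}"
  by (auto simp: st_def)

lemma bnd:
  assumes "card_less_b S" "A \<subseteq> S"
  shows "\<exists>g. \<forall>x\<in>A. le_star (f x) g"
proof (rule ccontr)
  assume "\<not> ?thesis"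
  hence "unbounded_family (f ` A)" unfolding unbounded_family_def by auto
  hence "ordLess2 (card_of S) (card_of (f ` A))" using assms(1) card_less_b_def by blast
  moreover have "ordLeq2 (card_of (f ` A)) (card_of S)"
    using card_of_image ordLeq_transitive card_of_mono1 assms(2) by blast
  ultimately show False using not_ordLess_ordLeq by blast
qed

theorem proposition4p3:
  fixes X :: "'a topology"
  assumes "card_less_b (topspace X)"
  shows "(set_star_Lindelof X \<longrightarrow> set_star_Hurewicz X) \<and>
         (set_strongly_star_Lindelof X \<longrightarrow> set_strongly_star_Hurewicz X)"
proof (intro conjI impI)
  assume L: "set_star_Lindelof X"
  show "set_star_Hurewicz X"
    unfolding set_star_Hurewicz_def
  proof (intro allI impI)
    fix A and U :: "nat \<Rightarrow> 'a set set"
    assume H: "A \<noteq> {} \<and> A \<subseteq> topspace X \<and>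
       (\<forall>n. (\<forall>U\<in>U n. openin X U) \<and> X closure_of A \<subseteq> \<Union>(U n))"
    have Ld: "\<And>B. (\<forall>U\<in>B. openin X U) \<Longrightarrow> X closure_of A \<subseteq> \<Union>B \<Longrightarrow>
       \<exists>V. countable V \<and> V \<subseteq> B \<and> A \<subseteq> st (\<Union>V) B"
      using L H unfolding set_star_Lindelof_def by simp
    have "\<forall>n. \<exists>V. countable V \<and> V \<subseteq> U n \<and> A \<subseteq> st (\<Union>V) (U n)"
      using Ld H by simp
    then obtain V where V: "\<And>n. countable (V n) \<and> V n \<subseteq> U n \<and> A \<subseteq> st (\<Union>(V n)) (U n)"
      by metis
    define e where "e n = from_nat_into (V n)" for n
    have ex: "\<exists>j. x \<in> st (e n j) (U n)" if "x \<in> A" for x n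
    proof -
      have "x \<in> st (\<Union>(V n)) (U n)" using V that by blast
      then obtain W v where W: "W \<in> U n" "x \<in> W" "v \<in> V n" "W \<inter> v \<noteq> {}"
        unfolding st_def by blast
      have "countable (V n)" using V by blast
      then obtain j where "e n j = v" unfolding e_def using from_nat_into_surj[of "V n" v] W(3) by blast
      thus ?thesis using W unfolding st_def by blast
    qed
    have ev: "e n j \<in> V n" for n j
    proof -
      obtain x where "x \<in> A" using H by blast
      hence "V n \<noteq> {}" using V[of n] st_empty by fastforce
      thus ?thesis unfolding e_def by (rule from_nat_into)
    qed
    define f where "f x n = (LEAST j. x \<in> st (e n j) (U n))" for x n
    obtain g where g: "\<forall>x\<in>A. le_star (f x) g" using bnd[OF assms, of A f] H by auto
    show "\<exists>W :: nat \<Rightarrow> 'a set set. (\<forall>n. finite (W n) \<and> W n \<subseteq> U n) \<and>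
         (\<forall>x\<in>A. \<forall>\<^sub>F n in sequentially. x \<in> st (\<Union>(W n)) (U n))"
    proof (rule exI[of _ "\<lambda>n. e n ` {..g n}"], intro conjI allI ballI)
      fix n show "finite (e n ` {..g n})" by simp
      show "e n ` {..g n} \<subseteq> U n" using ev V by blast
    next
      fix x assume x: "x \<in> A"
      have "\<forall>\<^sub>F n in sequentially. f x n \<le> g n" using g x le_star_def by blast
      thus "\<forall>\<^sub>F n in sequentially. x \<in> st (\<Union>(e n ` {..g n})) (U n)"
      proof (rule eventually_mono)
        fix n assume le: "f x n \<le> g n"
        have "x \<in> st (e n (f x n)) (U n)" unfolding f_def using ex[OF x] by (rule LeastI_ex)
        moreover have "e n (f x n) \<subseteq> \<Union>(e n ` {..g n})" using le by auto
        ultimately show "x \<in> st (\<Union>(e n ` {..g n})) (U n)" using st_mono by blast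
      qed
    qed
  qed
next
  assume L: "set_strongly_star_Lindelof X"
  show "set_strongly_star_Hurewicz X"
    unfolding set_strongly_star_Hurewicz_def
  proof (intro allI impI)
    fix A and U :: "nat \<Rightarrow> 'a set set"
    assume H: "A \<noteq> {} \<and> A \<subseteq> topspace X \<and>
       (\<forall>n. (\<forall>U\<in>U n. openin X U) \<and> X closure_of A \<subseteq> \<Union>(U n))"
    have Ld: "\<And>B. (\<forall>U\<in>B. openin X U) \<Longrightarrow> X closure_of A \<subseteq> \<Union>B \<Longrightarrow>
       \<exists>F. countable F \<and> F \<subseteq> X closure_of A \<and> A \<subseteq> st F B"
      using L H unfolding set_strongly_star_Lindelof_def by simp
    have "\<forall>n. \<exists>F. countable F \<and> F \<subseteq> X closure_of A \<and> A \<subseteq> st F (U n)"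
      using Ld H by simp
    then obtain V where V: "\<And>n. countable (V n) \<and> V n \<subseteq> X closure_of A \<and> A \<subseteq> st (V n) (U n)"
      by metis
    define e where "e n = from_nat_into (V n)" for n
    have ex: "\<exists>j. x \<in> st {e n j} (U n)" if "x \<in> A" for x n
    proof -
      have "x \<in> st (V n) (U n)" using V that by blast
      then obtain W v where W: "W \<in> U n" "x \<in> W" "v \<in> V n" "v \<in> W"
        unfolding st_def by blast
      have "countable (V n)" using V by blast
      then obtain j where "e n j = v" unfolding e_def using from_nat_into_surj[of "V n" v] W(3) by blast
      thus ?thesis using W unfolding st_def by blast
    qed
    have ev: "e n j \<in> V n" for n j
    proof -
      obtain x where "x \<in> A" using H by blast
      hence "V n \<noteq> {}" using V[of n] st_empty by fastforce
      thus ?thesis unfolding e_def by (rule from_nat_into)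
    qed
    define f where "f x n = (LEAST j. x \<in> st {e n j} (U n))" for x n
    obtain g where g: "\<forall>x\<in>A. le_star (f x) g" using bnd[OF assms, of A f] H by auto
    show "\<exists>F :: nat \<Rightarrow> 'a set. (\<forall>n. finite (F n) \<and> F n \<subseteq> X closure_of A) \<and>
         (\<forall>x\<in>A. \<forall>\<^sub>F n in sequentially. x \<in> st (F n) (U n))"
    proof (rule exI[of _ "\<lambda>n. e n ` {..g n}"], intro conjI allI ballI)
      fix n show "finite (e n ` {..g n})" by simp
      show "e n ` {..g n} \<subseteq> X closure_of A" using ev V by blast
    next
      fix x assume x: "x \<in> A"
      have "\<forall>\<^sub>F n in sequentially. f x n \<le> g n" using g x le_star_def by blast
      thus "\<forall>\<^sub>F n in sequentially. x \<in> st (e n ` {..g n}) (U n)"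
      proof (rule eventually_mono)
        fix n assume le: "f x n \<le> g n"
        have "x \<in> st {e n (f x n)} (U n)" unfolding f_def using ex[OF x] by (rule LeastI_ex)
        moreover have "{e n (f x n)} \<subseteq> e n ` {..g n}" using le by auto
        ultimately show "x \<in> st (e n ` {..g n}) (U n)" using st_mono by blast
      qed
    qed
  qed
qed

end
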